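(* Let $K$ be a field, $\nu$ a valuation on $K[x]$, and $Q,Q'$ key polynomials for $\nu$ with $\epsilon(Q)\le\epsilon(Q')$. Then for every $f\in K[x]$, if $\nu_Q(f)=\nu(f)$ then $\nu_{Q'}(f)=\nu(f)$.
   Context: $\nu:K[x]\to\Gamma\cup\{\infty\}$ is a valuation ($\Gamma$ an ordered abelian group) with $\nu(f)=\infty$ only for $f=0$; $\Gamma'=\Gamma\otimes\mathbb{Q}$. For $k\in\mathbb{N}$, $\partial_kf=\frac{1}{k!}\frac{d^kf}{dx^k}$. For nonconstant $f$, $\epsilon(f)=\max\{(\nu(f)-\nu(\partial_kf))/k\mid 1\le k\le\deg f,\ \partial_kf\ne0\}\in\Gamma'$. A key polynomial is a monic nonconstant $Q\in K[x]$ such that every nonconstant $f\in K[x]$ with $\epsilon(f)\ge\epsilon(Q)$ satisfies $\deg f\ge\deg Q$. For monic nonconstant $Q$, the $Q$-expansion of $f$ is the unique expression $f=f_0+f_1Q+\dots+f_nQ^n$ with each $f_i=0$ or $\deg f_i<\deg Q$, and $\nu_Q(f)=\min_i\nu(f_iQ^i)$ (the $Q$-truncation of $\nu$). *)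

theory Defs
  imports "HOL-Computational_Algebra.Polynomial"
begin

text \<open>Valuation on K[x] with values in Gamma \<union> {\<infinity>}: we represent nu as a total
 function into Gamma whose value at 0 is irrelevant (nu 0 = \<infinity> by convention);
 all axioms and uses only concern nonzero polynomials.\<close>
definition is_valuation :: "('a::field poly \<Rightarrow> 'g::linordered_ab_group_add) \<Rightarrow> bool" where
  "is_valuation \<nu> \<longleftrightarrow>
     (\<forall>f g. f \<noteq> 0 \<longrightarrow> g \<noteq> 0 \<longrightarrow> \<nu> (f * g) = \<nu> f + \<nu> g) \<and>
     (\<forall>f g. f \<noteq> 0 \<longrightarrow> g \<noteq> 0 \<longrightarrow> f + g \<noteq> 0 \<longrightarrow> min (\<nu> f) (\<nu> g) \<le> \<nu> (f + g))"

text \<open>Hasse derivative: partial_k f = (1/k!) d^k f / dx^k, i.e. coefficientwise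
 x^i \<mapsto> (i choose k) x^(i-k).\<close>
definition hasse_deriv :: "nat \<Rightarrow> 'a::comm_ring_1 poly \<Rightarrow> 'a poly" where
  "hasse_deriv k f = Abs_poly (\<lambda>i. of_nat ((i + k) choose k) * coeff f (i + k))"

definition nsmul :: "nat \<Rightarrow> 'g::ab_group_add \<Rightarrow> 'g" where
  "nsmul n a = ((+) a ^^ n) 0"

text \<open>Elements of Gamma' = Gamma \<otimes> Q represented as a/m (a in Gamma, m > 0);
 a/m \<le> b/n iff n a \<le> m b.\<close>
definition frac_le :: "'g::linordered_ab_group_add \<times> nat \<Rightarrow> 'g \<times> nat \<Rightarrow> bool" where
  "frac_le p q \<longleftrightarrow> nsmul (snd q) (fst p) \<le> nsmul (snd p) (fst q)"

definition eps_idx :: "'a::field poly \<Rightarrow> nat set" where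
  "eps_idx f = {k. 1 \<le> k \<and> k \<le> degree f \<and> hasse_deriv k f \<noteq> 0}"

definition eps_term :: "('a::field poly \<Rightarrow> 'g::linordered_ab_group_add) \<Rightarrow> 'a poly \<Rightarrow> nat \<Rightarrow> 'g \<times> nat" where
  "eps_term \<nu> f k = (\<nu> f - \<nu> (hasse_deriv k f), k)"

text \<open>eps_le nu f g means epsilon(f) \<le> epsilon(g), where epsilon is the maximum of the
 candidates; i.e. some candidate of g dominates all candidates of f.\<close>
definition eps_le :: "('a::field poly \<Rightarrow> 'g::linordered_ab_group_add) \<Rightarrow> 'a poly \<Rightarrow> 'a poly \<Rightarrow> bool" where
  "eps_le \<nu> f g \<longleftrightarrow>
     (\<exists>k\<in>eps_idx g. \<forall>j\<in>eps_idx f. frac_le (eps_term \<nu> f j) (eps_term \<nu> g k))"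

definition key_poly :: "('a::field poly \<Rightarrow> 'g::linordered_ab_group_add) \<Rightarrow> 'a poly \<Rightarrow> bool" where
  "key_poly \<nu> Q \<longleftrightarrow> lead_coeff Q = 1 \<and> degree Q > 0 \<and>
     (\<forall>f. degree f > 0 \<longrightarrow> eps_le \<nu> Q f \<longrightarrow> degree Q \<le> degree f)"

text \<open>i-th coefficient of the Q-expansion f = sum f_i Q^i (deg f_i < deg Q or f_i = 0).\<close>
definition expcoeff :: "'a::field poly \<Rightarrow> 'a poly \<Rightarrow> nat \<Rightarrow> 'a poly" where
  "expcoeff Q f i = (f div Q ^ i) mod Q"

definition trunc_val :: "('a::field poly \<Rightarrow> 'g::linordered_ab_group_add) \<Rightarrow> 'a poly \<Rightarrow> 'a poly \<Rightarrow> 'g" where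
  "trunc_val \<nu> Q f = Min {\<nu> (expcoeff Q f i * Q ^ i) | i. i \<le> degree f \<and> expcoeff Q f i \<noteq> 0}"

end

theory Submission
  imports Defs
begin



lemma nsmul_0[simp]: "nsmul 0 a = 0" by (simp add: nsmul_def)
lemma nsmul_Suc: "nsmul (Suc n) a = a + nsmul n a" by (simp add: nsmul_def)
lemma nsmul_add_left: "nsmul (m+n) a = nsmul m a + nsmul n a"
  by (induction m) (simp_all add: nsmul_Suc ac_simps)
lemma nsmul_add_right: "nsmul n (a + c) = nsmul n a + nsmul n c"
  by (induction n) (simp_all add: nsmul_Suc ac_simps)
lemma nsmul_zero[simp]: "nsmul n 0 = 0"
  by (induction n) (simp_all add: nsmul_Suc)
lemma nsmul_minus: "nsmul n (- a) = - nsmul n a"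
  using nsmul_add_right[of n a "-a"] by (metis nsmul_zero neg_eq_iff_add_eq_0 right_minus)
lemma nsmul_diff: "nsmul n (a - c) = nsmul n a - nsmul n c"
  using nsmul_add_right[of n a "-c"] nsmul_minus[of n c] by simp
lemma nsmul_mult: "nsmul (m*n) a = nsmul m (nsmul n a)"
  by (induction m) (simp_all add: nsmul_Suc nsmul_add_left)
lemma nsmul_comm: "nsmul m (nsmul n a) = nsmul n (nsmul m a)"
  by (metis nsmul_mult mult.commute)
lemma nsmul_mono: "(a::'g::linordered_ab_group_add) \<le> c \<Longrightarrow> nsmul n a \<le> nsmul n c"
  by (induction n) (simp_all add: nsmul_Suc add_mono)
lemma nsmul_strict: "n > 0 \<Longrightarrow> (a::'g::linordered_ab_group_add) < c \<Longrightarrow> nsmul n a < nsmul n c"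
proof (induction n)
  case (Suc n) then show ?case
    by (cases n) (simp_all add: nsmul_Suc add_strict_mono)
qed simp
lemma nsmul_less_cancel: "nsmul n (a::'g::linordered_ab_group_add) < nsmul n c \<Longrightarrow> a < c"
  using nsmul_mono[of c a n] by (meson not_le)
lemma nsmul_le_cancel: "n > 0 \<Longrightarrow> nsmul n (a::'g::linordered_ab_group_add) \<le> nsmul n c \<Longrightarrow> a \<le> c"
  using nsmul_strict[of n c a] by (meson not_le)

lemma coeff_hasse: "coeff (hasse_deriv k f) i = of_nat ((i + k) choose k) * coeff f (i + k)"
proof -
  have "coeff (Abs_poly (\<lambda>i. of_nat ((i + k) choose k) * coeff f (i + k))) = (\<lambda>i. of_nat ((i + k) choose k) * coeff f (i + k))"
    by (rule coeff_Abs_poly[where n="degree f"]) (simp add: coeff_eq_0)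
  then show ?thesis by (simp add: hasse_deriv_def)
qed

lemma hasse_0[simp]: "hasse_deriv 0 f = f"
  by (rule poly_eqI) (simp add: coeff_hasse)
lemma hasse_zero[simp]: "hasse_deriv k 0 = 0"
  by (rule poly_eqI) (simp add: coeff_hasse)
lemma hasse_add: "hasse_deriv k (f + g) = hasse_deriv k f + hasse_deriv k g"
  by (rule poly_eqI) (simp add: coeff_hasse algebra_simps)
lemma hasse_sum: "hasse_deriv k (sum f I) = (\<Sum>i\<in>I. hasse_deriv k (f i))"
  by (induction I rule: infinite_finite_induct) (simp_all add: hasse_add)
lemma hasse_smult: "hasse_deriv k (smult a f) = smult a (hasse_deriv k f)"
  by (rule poly_eqI) (simp add: coeff_hasse algebra_simps)
lemma hasse_gt: "k > degree f \<Longrightarrow> hasse_deriv k f = 0"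
  by (rule poly_eqI) (simp add: coeff_hasse coeff_eq_0)
lemma hasse_nz_le: "hasse_deriv k f \<noteq> 0 \<Longrightarrow> k \<le> degree f"
  using hasse_gt by (meson not_le)
lemma hasse_deg: "f \<noteq> 0 \<Longrightarrow> hasse_deriv (degree f) f \<noteq> 0"
proof
  assume "f \<noteq> 0" "hasse_deriv (degree f) f = 0"
  then have "coeff (hasse_deriv (degree f) f) 0 = 0" by simp
  then show False using \<open>f \<noteq> 0\<close> by (simp add: coeff_hasse)
qed
lemma hasse_const: "k > 0 \<Longrightarrow> hasse_deriv k [:a:] = 0"
  by (rule hasse_gt) simp
lemma hasse_one: "k > 0 \<Longrightarrow> hasse_deriv k 1 = 0"
  by (rule hasse_gt) simp

lemma hasse_X: "hasse_deriv (Suc k) (pCons 0 h) = pCons 0 (hasse_deriv (Suc k) h) + hasse_deriv k h"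
proof (rule poly_eqI)
  fix i show "coeff (hasse_deriv (Suc k) (pCons 0 h)) i = coeff (pCons 0 (hasse_deriv (Suc k) h) + hasse_deriv k h) i"
  proof (cases i)
    case 0 then show ?thesis by (simp add: coeff_hasse)
  next
    case (Suc j)
    have "((Suc j + Suc k) choose Suc k) = ((j + Suc k) choose Suc k) + ((Suc j + k) choose k)"
      by simp
    then show ?thesis using Suc by (simp add: coeff_hasse algebra_simps coeff_pCons split: nat.splits)
  qed
qed

lemma sum_pCons0: "(\<Sum>i\<in>I. pCons 0 (f i)) = pCons 0 (sum f I)"
  by (induction I rule: infinite_finite_induct) (simp_all add: add_pCons[symmetric])

lemma pCons0_mult: "pCons 0 x * y = pCons 0 (x * y)"
  by simp

lemma hasse_leibniz: "hasse_deriv k (f*g) = (\<Sum>i\<le>k. hasse_deriv i f * hasse_deriv (k-i) g)"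
proof (induction f arbitrary: k rule: pCons_induct)
  case 0 then show ?case by simp
next
  case (pCons a p)
  show ?case
  proof (cases k)
    case 0 then show ?thesis by simp
  next
    case (Suc k')
    have dp: "hasse_deriv (Suc i) (pCons a p) = pCons 0 (hasse_deriv (Suc i) p) + hasse_deriv i p" for i
    proof -
      have "hasse_deriv (Suc i) (pCons a p) = hasse_deriv (Suc i) ([:a:] + pCons 0 p)" by simp
      also have "\<dots> = pCons 0 (hasse_deriv (Suc i) p) + hasse_deriv i p"
        by (simp only: hasse_add hasse_const[OF zero_less_Suc] hasse_X) simp
      finally show ?thesis .
    qed
    have "hasse_deriv k (pCons a p * g) = smult a (hasse_deriv (Suc k') g) + pCons 0 (hasse_deriv (Suc k') (p*g)) + hasse_deriv k' (p*g)"
      using Suc by (simp add: hasse_add hasse_smult hasse_X)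
    also have "\<dots> = smult a (hasse_deriv (Suc k') g) + pCons 0 (p * hasse_deriv (Suc k') g + (\<Sum>i\<le>k'. hasse_deriv (Suc i) p * hasse_deriv (k' - i) g)) + (\<Sum>i\<le>k'. hasse_deriv i p * hasse_deriv (k'-i) g)"
      using pCons.IH[of "Suc k'"] pCons.IH[of k'] by (simp del: sum.atMost_Suc add: sum.atMost_Suc_shift)
    also have "\<dots> = (\<Sum>i\<le>k. hasse_deriv i (pCons a p) * hasse_deriv (k-i) g)"
      using Suc by (simp del: sum.atMost_Suc add: sum.atMost_Suc_shift dp distrib_right sum.distrib sum_pCons0 add_pCons)
    finally show ?thesis .
  qed
qed




locale val =
  fixes nu :: "'a::field poly \<Rightarrow> 'g::linordered_ab_group_add"
  assumes val: "is_valuation nu"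
begin

lemma nu_mult: "f \<noteq> 0 \<Longrightarrow> g \<noteq> 0 \<Longrightarrow> nu (f*g) = nu f + nu g"
  using val by (simp add: is_valuation_def)
lemma nu_ultra: "f \<noteq> 0 \<Longrightarrow> g \<noteq> 0 \<Longrightarrow> f + g \<noteq> 0 \<Longrightarrow> min (nu f) (nu g) \<le> nu (f+g)"
  using val by (simp add: is_valuation_def)
lemma nu_one: "nu 1 = 0"
  using nu_mult[of 1 1] by simp
lemma nu_m1: "nu (-1) = 0"
proof -
  have "nu (-1) + nu (-1) = 0" using nu_mult[of "-1" "-1"] nu_one by simp
  then show ?thesis by (simp add: double_zero)
qed
lemma nu_neg: "a \<noteq> 0 \<Longrightarrow> nu (-a) = nu a"
  using nu_mult[of "-1" a] nu_m1 by simp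

lemma nu_dom: "a \<noteq> 0 \<Longrightarrow> b \<noteq> 0 \<Longrightarrow> nu a < nu b \<Longrightarrow> a + b \<noteq> 0 \<and> nu (a+b) = nu a"
proof -
  assume a: "a \<noteq> 0" and b: "b \<noteq> 0" and l: "nu a < nu b"
  have ab: "a + b \<noteq> 0"
  proof
    assume "a + b = 0" then have "b = -a" by (metis add.commute eq_neg_iff_add_eq_0)
    then show False using l nu_neg[OF a] by simp
  qed
  have 1: "nu a \<le> nu (a+b)" using nu_ultra[OF a b ab] l by simp
  have "min (nu (a+b)) (nu (-b)) \<le> nu ((a+b) + (-b))"
    using nu_ultra[OF ab, of "-b"] b a by simp
  then have "nu (a+b) \<le> nu a" using l nu_neg[OF b] by (simp add: min_def split: if_splits)
  then show ?thesis using 1 ab by simp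
qed

lemma sum_exists_le:
  assumes "finite I" "sum t I \<noteq> 0"
  shows "\<exists>i\<in>I. t i \<noteq> 0 \<and> nu (t i) \<le> nu (sum t I)"
  using assms
proof (induction I rule: finite_induct)
  case empty then show ?case by simp
next
  case (insert x F)
  have S: "sum t (insert x F) = t x + sum t F" using insert by simp
  show ?case
  proof (cases "t x = 0")
    case True then show ?thesis using insert S by auto
  next
    case tx: False
    show ?thesis
    proof (cases "sum t F = 0")
      case True then show ?thesis using S tx by auto
    next
      case False
      have m: "min (nu (t x)) (nu (sum t F)) \<le> nu (sum t (insert x F))"
        using nu_ultra[OF tx False] S insert.prems by simp
      show ?thesis
      proof (cases "nu (t x) \<le> nu (sum t (insert x F))")
        case True then show ?thesis using tx by auto
      next
        case c: False
        then have "nu (sum t F) \<le> nu (sum t (insert x F))" using m by (simp add: min_def split: if_splits)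
        moreover obtain i where "i \<in> F" "t i \<noteq> 0" "nu (t i) \<le> nu (sum t F)" using insert.IH False by auto
        ultimately show ?thesis by force
      qed
    qed
  qed
qed

lemma sum_unique:
  assumes "finite I" "i0 \<in> I" "t i0 \<noteq> 0" "\<And>i. i \<in> I \<Longrightarrow> i \<noteq> i0 \<Longrightarrow> t i \<noteq> 0 \<Longrightarrow> nu (t i0) < nu (t i)"
  shows "sum t I \<noteq> 0 \<and> nu (sum t I) = nu (t i0)"
proof -
  have S: "sum t I = t i0 + sum t (I - {i0})" using assms by (simp add: sum.remove)
  show ?thesis
  proof (cases "sum t (I - {i0}) = 0")
    case True then show ?thesis using S assms by simp
  next
    case False
    obtain i where i: "i \<in> I - {i0}" "t i \<noteq> 0" "nu (t i) \<le> nu (sum t (I - {i0}))"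
      using sum_exists_le[of "I - {i0}" t] False assms by auto
    have "nu (t i0) < nu (sum t (I - {i0}))" using assms(4)[of i] i by auto
    then show ?thesis using nu_dom[OF assms(3) False] S by simp
  qed
qed

end



context val begin

definition bnd :: "'g \<Rightarrow> nat \<Rightarrow> 'a poly \<Rightarrow> nat \<Rightarrow> bool" where
  "bnd A b h k \<longleftrightarrow> (hasse_deriv k h \<noteq> 0 \<longrightarrow> nsmul b (nu h) \<le> nsmul b (nu (hasse_deriv k h)) + nsmul k A)"
definition sbnd :: "'g \<Rightarrow> nat \<Rightarrow> 'a poly \<Rightarrow> nat \<Rightarrow> bool" where
  "sbnd A b h k \<longleftrightarrow> (hasse_deriv k h \<noteq> 0 \<longrightarrow> nsmul b (nu h) < nsmul b (nu (hasse_deriv k h)) + nsmul k A)"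
definition good :: "'g \<Rightarrow> nat \<Rightarrow> 'a poly \<Rightarrow> nat \<Rightarrow> bool" where
  "good A b h a \<longleftrightarrow> h \<noteq> 0 \<and> (\<forall>k. bnd A b h k) \<and> (\<forall>k>a. sbnd A b h k) \<and> hasse_deriv a h \<noteq> 0 \<and>
     nsmul b (nu h) = nsmul b (nu (hasse_deriv a h)) + nsmul a A"

lemma split_prod:
  assumes "g \<noteq> 0" "h \<noteq> 0" "hasse_deriv i g \<noteq> 0" "hasse_deriv j h \<noteq> 0"
  shows "nsmul b (nu (g*h)) = nsmul b (nu g) + nsmul b (nu h) \<and>
    nsmul b (nu (hasse_deriv i g * hasse_deriv j h)) + nsmul (i+j) A =
     (nsmul b (nu (hasse_deriv i g)) + nsmul i A) + (nsmul b (nu (hasse_deriv j h)) + nsmul j A)"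
  using assms by (simp_all add: nu_mult nsmul_add_right nsmul_add_left ac_simps)

lemma good_mult:
  assumes g: "good A b g a" and h: "good A b h c"
  shows "good A b (g*h) (a+c)"
proof -
  have g0: "g \<noteq> 0" and h0: "h \<noteq> 0" using g h by (auto simp: good_def)
  define t where "t k i = hasse_deriv i g * hasse_deriv (k-i) h" for k i
  have D: "hasse_deriv k (g*h) = (\<Sum>i\<le>k. t k i)" for k by (simp add: hasse_leibniz t_def)
  have tnz: "t k i \<noteq> 0 \<longleftrightarrow> hasse_deriv i g \<noteq> 0 \<and> hasse_deriv (k-i) h \<noteq> 0" for k i
    by (simp add: t_def)
  have B: "nsmul b (nu (g*h)) \<le> nsmul b (nu (t k i)) + nsmul k A" if "i \<le> k" "t k i \<noteq> 0" for k i
  proof -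
    have 1: "hasse_deriv i g \<noteq> 0" "hasse_deriv (k-i) h \<noteq> 0" using that tnz by auto
    have "nsmul b (nu g) \<le> nsmul b (nu (hasse_deriv i g)) + nsmul i A"
      using g 1 by (auto simp: good_def bnd_def)
    moreover have "nsmul b (nu h) \<le> nsmul b (nu (hasse_deriv (k-i) h)) + nsmul (k-i) A"
      using h 1 by (auto simp: good_def bnd_def)
    ultimately show ?thesis using split_prod[OF g0 h0 1, where b=b and A=A] that(1) unfolding t_def
      by (simp add: add_mono)
  qed
  have SB: "nsmul b (nu (g*h)) < nsmul b (nu (t k i)) + nsmul k A"
    if "i \<le> k" "t k i \<noteq> 0" "a < i \<or> c < k - i" for k i
  proof -
    have 1: "hasse_deriv i g \<noteq> 0" "hasse_deriv (k-i) h \<noteq> 0" using that tnz by auto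
    have a1: "nsmul b (nu g) \<le> nsmul b (nu (hasse_deriv i g)) + nsmul i A"
      using g 1 by (auto simp: good_def bnd_def)
    have a2: "nsmul b (nu h) \<le> nsmul b (nu (hasse_deriv (k-i) h)) + nsmul (k-i) A"
      using h 1 by (auto simp: good_def bnd_def)
    have "nsmul b (nu g) + nsmul b (nu h) < (nsmul b (nu (hasse_deriv i g)) + nsmul i A) + (nsmul b (nu (hasse_deriv (k-i) h)) + nsmul (k-i) A)"
    proof (cases "a < i")
      case True
      then have "nsmul b (nu g) < nsmul b (nu (hasse_deriv i g)) + nsmul i A"
        using g 1 by (auto simp: good_def sbnd_def)
      then show ?thesis using a2 by (rule add_less_le_mono)
    next
      case False
      then have "nsmul b (nu h) < nsmul b (nu (hasse_deriv (k-i) h)) + nsmul (k-i) A"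
        using h 1 that(3) by (auto simp: good_def sbnd_def)
      with a1 show ?thesis by (rule add_le_less_mono)
    qed
    then show ?thesis using split_prod[OF g0 h0 1, where b=b and A=A] that(1) unfolding t_def
      by simp
  qed
  have bnd: "bnd A b (g*h) k" for k
  proof (unfold bnd_def, intro impI)
    assume "hasse_deriv k (g*h) \<noteq> 0"
    then obtain i where i: "i \<le> k" "t k i \<noteq> 0" "nu (t k i) \<le> nu (hasse_deriv k (g*h))"
      using sum_exists_le[of "{..k}" "t k"] D by auto
    have "nsmul b (nu (g*h)) \<le> nsmul b (nu (t k i)) + nsmul k A" using B i by auto
    also have "\<dots> \<le> nsmul b (nu (hasse_deriv k (g*h))) + nsmul k A"
      using i(3) by (simp add: nsmul_mono)
    finally show "nsmul b (nu (g*h)) \<le> nsmul b (nu (hasse_deriv k (g*h))) + nsmul k A" .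
  qed
  have sbnd: "sbnd A b (g*h) k" if "k > a + c" for k
  proof (unfold sbnd_def, intro impI)
    assume "hasse_deriv k (g*h) \<noteq> 0"
    then obtain i where i: "i \<le> k" "t k i \<noteq> 0" "nu (t k i) \<le> nu (hasse_deriv k (g*h))"
      using sum_exists_le[of "{..k}" "t k"] D by auto
    have "a < i \<or> c < k - i" using that i by auto
    then have "nsmul b (nu (g*h)) < nsmul b (nu (t k i)) + nsmul k A" using SB i by blast
    also have "\<dots> \<le> nsmul b (nu (hasse_deriv k (g*h))) + nsmul k A"
      using i(3) by (simp add: nsmul_mono)
    finally show "nsmul b (nu (g*h)) < nsmul b (nu (hasse_deriv k (g*h))) + nsmul k A" .
  qed
  let ?k = "a + c"
  have ta: "t ?k a \<noteq> 0" using g h by (simp add: t_def good_def)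
  have eqa: "nsmul b (nu (g*h)) = nsmul b (nu (t ?k a)) + nsmul ?k A"
  proof -
    have 1: "hasse_deriv a g \<noteq> 0" "hasse_deriv (?k - a) h \<noteq> 0" using ta tnz by auto
    show ?thesis using split_prod[OF g0 h0 1, where b=b and A=A] g h unfolding t_def good_def by simp
  qed
  have U: "hasse_deriv ?k (g*h) \<noteq> 0 \<and> nu (hasse_deriv ?k (g*h)) = nu (t ?k a)"
    unfolding D
  proof (rule sum_unique)
    fix i assume i: "i \<in> {..?k}" "i \<noteq> a" "t ?k i \<noteq> 0"
    then have "a < i \<or> c < ?k - i" by auto
    then have "nsmul b (nu (g*h)) < nsmul b (nu (t ?k i)) + nsmul ?k A" using SB i by auto
    then have "nsmul b (nu (t ?k a)) < nsmul b (nu (t ?k i))" using eqa by simp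
    then show "nu (t ?k a) < nu (t ?k i)" by (rule nsmul_less_cancel)
  qed (use ta in auto)
  show ?thesis unfolding good_def using g0 h0 bnd sbnd U eqa by auto
qed

lemma good_one: "good A b 1 0"
proof -
  have "hasse_deriv k 1 \<noteq> 0 \<Longrightarrow> k = 0" for k::nat using hasse_one[of k] by auto
  then have "bnd A b 1 k" "k > 0 \<Longrightarrow> sbnd A b 1 k" for k
    by (fastforce simp: bnd_def sbnd_def)+
  then show ?thesis by (auto simp: good_def)
qed

lemma good_power: "good A b Q a \<Longrightarrow> good A b (Q^j) (j*a)"
proof (induction j)
  case 0 then show ?case by (simp add: good_one)
next
  case (Suc j) then show ?case using good_mult[of A b Q a "Q^j" "j*a"] by simp
qed

end



lemma frac_refl: "frac_le p p" by (simp add: frac_le_def)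
lemma frac_total: "frac_le p q \<or> frac_le q p" by (auto simp: frac_le_def)
lemma frac_trans:
  assumes "snd q > 0" "frac_le p q" "frac_le q r" shows "frac_le p r"
proof -
  obtain x m where p: "p = (x,m)" by force
  obtain y n where q: "q = (y,n)" by force
  obtain z l where r: "r = (z,l)" by force
  have 1: "nsmul n x \<le> nsmul m y" "nsmul l y \<le> nsmul n z" using assms p q r by (auto simp: frac_le_def)
  have "nsmul n (nsmul l x) = nsmul l (nsmul n x)" by (rule nsmul_comm)
  also have "\<dots> \<le> nsmul l (nsmul m y)" using 1 by (simp add: nsmul_mono)
  also have "\<dots> = nsmul m (nsmul l y)" by (rule nsmul_comm)
  also have "\<dots> \<le> nsmul m (nsmul n z)" using 1 by (simp add: nsmul_mono)
  also have "\<dots> = nsmul n (nsmul m z)" by (rule nsmul_comm)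
  finally have "nsmul l x \<le> nsmul m z" using assms(1) q by (auto intro: nsmul_le_cancel)
  then show ?thesis using p r by (simp add: frac_le_def)
qed
lemma frac_lt_le:
  assumes "\<not> frac_le q p" "frac_le q r" "snd r > 0" shows "\<not> frac_le r p"
proof -
  obtain x m where p: "p = (x,m)" by force
  obtain y n where q: "q = (y,n)" by force
  obtain z l where r: "r = (z,l)" by force
  have 1: "nsmul n x < nsmul m y" "nsmul l y \<le> nsmul n z" using assms p q r by (auto simp: frac_le_def)
  have "nsmul n (nsmul l x) = nsmul l (nsmul n x)" by (rule nsmul_comm)
  also have "\<dots> < nsmul l (nsmul m y)" using 1 assms(3) r by (simp add: nsmul_strict)
  also have "\<dots> = nsmul m (nsmul l y)" by (rule nsmul_comm)
  also have "\<dots> \<le> nsmul m (nsmul n z)" using 1 by (simp add: nsmul_mono)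
  also have "\<dots> = nsmul n (nsmul m z)" by (rule nsmul_comm)
  finally have "nsmul l x < nsmul m z" by (rule nsmul_less_cancel)
  then show ?thesis using p r by (simp add: frac_le_def)
qed

lemma frac_max_exists:
  assumes "finite S" "S \<noteq> {}" "\<forall>j\<in>S. snd (p j) > 0"
  shows "\<exists>b\<in>S. \<forall>j\<in>S. frac_le (p j) (p b)"
  using assms
proof (induction S rule: finite_ne_induct)
  case (singleton x) then show ?case by (simp add: frac_refl)
next
  case (insert x F)
  then obtain b where b: "b \<in> F" "\<forall>j\<in>F. frac_le (p j) (p b)" by auto
  show ?case
  proof (cases "frac_le (p x) (p b)")
    case True then show ?thesis using b by auto
  next
    case False
    then have "frac_le (p b) (p x)" using frac_total by blast
    then have "\<forall>j\<in>F. frac_le (p j) (p x)" using b insert.prems frac_trans by blast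
    then show ?thesis by (auto simp: frac_refl)
  qed
qed

lemma eps_idx_finite: "finite (eps_idx f)"
  by (rule finite_subset[of _ "{..degree f}"]) (auto simp: eps_idx_def)

lemma nsmul_diff_le: "nsmul b ((x::'g::linordered_ab_group_add) - y) \<le> C \<longleftrightarrow> nsmul b x \<le> nsmul b y + C"
  by (simp add: nsmul_diff diff_le_eq add.commute)
lemma nsmul_diff_less: "nsmul b ((x::'g::linordered_ab_group_add) - y) < C \<longleftrightarrow> nsmul b x < nsmul b y + C"
  by (simp add: nsmul_diff diff_less_eq add.commute)

context val begin

lemma key_setup:
  assumes key: "key_poly nu Q"
  shows "\<exists>A b. b \<ge> 1 \<and> b \<in> eps_idx Q \<and> eps_term nu Q b = (A, b) \<and> (\<forall>j\<in>eps_idx Q. frac_le (eps_term nu Q j) (A, b)) \<and>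
     good A b Q b \<and> (\<forall>h. h \<noteq> 0 \<longrightarrow> degree h < degree Q \<longrightarrow> good A b h 0)"
proof -
  let ?I = "eps_idx Q"
  let ?t = "eps_term nu Q"
  have dQ: "degree Q > 0" and Q0: "Q \<noteq> 0" using key by (auto simp: key_poly_def)
  have "degree Q \<in> ?I" using dQ hasse_deg[OF Q0] by (simp add: eps_idx_def)
  then have Ine: "?I \<noteq> {}" by auto
  have pos: "\<forall>j\<in>?I. snd (?t j) > 0" by (auto simp: eps_idx_def eps_term_def)
  define M where "M = {b\<in>?I. \<forall>j\<in>?I. frac_le (?t j) (?t b)}"
  have Mfin: "finite M" using eps_idx_finite[of Q] unfolding M_def by auto
  have Mne: "M \<noteq> {}" using frac_max_exists[OF eps_idx_finite Ine pos] by (auto simp: M_def)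
  define b where "b = Max M"
  have bM: "b \<in> M" using Mfin Mne b_def by simp
  define A where "A = nu Q - nu (hasse_deriv b Q)"
  have tb: "?t b = (A, b)" by (simp add: eps_term_def A_def)
  have bI: "b \<in> ?I" and bmax: "\<forall>j\<in>?I. frac_le (?t j) (A, b)" using bM tb by (auto simp: M_def)
  have b1: "b \<ge> 1" using bI by (simp add: eps_idx_def)
  have strict: "\<not> frac_le (A,b) (?t j)" if "j \<in> ?I" "j > b" for j
  proof
    assume "frac_le (A,b) (?t j)"
    then have "\<forall>i\<in>?I. frac_le (?t i) (?t j)" using bmax frac_trans[of "(A,b)"] b1 by auto
    then have "j \<in> M" using that by (simp add: M_def)
    then show False using that Mfin b_def by (simp add: leD)
  qed
  have goodQ: "good A b Q b"
  proof -
    have "bnd A b Q k" for k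
    proof (cases "k = 0")
      case True then show ?thesis by (simp add: bnd_def)
    next
      case False
      show ?thesis unfolding bnd_def
      proof
        assume "hasse_deriv k Q \<noteq> 0"
        then have "k \<in> ?I" using False hasse_nz_le by (auto simp: eps_idx_def)
        then have "frac_le (?t k) (A,b)" using bmax by auto
        then show "nsmul b (nu Q) \<le> nsmul b (nu (hasse_deriv k Q)) + nsmul k A"
          by (simp add: frac_le_def eps_term_def nsmul_diff_le)
      qed
    qed
    moreover have "sbnd A b Q k" if "k > b" for k
      unfolding sbnd_def
    proof
      assume "hasse_deriv k Q \<noteq> 0"
      then have "k \<in> ?I" using that b1 hasse_nz_le by (auto simp: eps_idx_def)
      then have "\<not> frac_le (A,b) (?t k)" using strict that by auto
      then show "nsmul b (nu Q) < nsmul b (nu (hasse_deriv k Q)) + nsmul k A"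
        by (simp add: frac_le_def eps_term_def nsmul_diff_less not_le)
    qed
    moreover have "hasse_deriv b Q \<noteq> 0" using bI by (simp add: eps_idx_def)
    moreover have "nsmul b (nu Q) = nsmul b (nu (hasse_deriv b Q)) + nsmul b A"
      by (simp add: A_def nsmul_diff)
    ultimately show ?thesis using Q0 by (simp add: good_def)
  qed
  have goodh: "good A b h 0" if h0: "h \<noteq> 0" and dh: "degree h < degree Q" for h
  proof -
    have sb: "sbnd A b h k" if "k > 0" for k
      unfolding sbnd_def
    proof
      assume nz: "hasse_deriv k h \<noteq> 0"
      then have kh: "k \<le> degree h" by (rule hasse_nz_le)
      then have kI: "k \<in> eps_idx h" using that nz by (simp add: eps_idx_def)
      have "degree h > 0" using kh that by simp
      then have "\<not> eps_le nu Q h" using key dh unfolding key_poly_def by (meson leD)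
      then obtain j where j: "j \<in> ?I" "\<not> frac_le (?t j) (eps_term nu h k)"
        using kI by (auto simp: eps_le_def)
      have "\<not> frac_le (A,b) (eps_term nu h k)"
        using frac_lt_le[OF j(2)] bmax j(1) b1 by auto
      then show "nsmul b (nu h) < nsmul b (nu (hasse_deriv k h)) + nsmul k A"
        by (simp add: frac_le_def eps_term_def nsmul_diff_less not_le)
    qed
    have "bnd A b h k" for k
    proof (cases "k = 0")
      case True then show ?thesis by (simp add: bnd_def)
    next
      case False then show ?thesis using sb[of k] by (auto simp: bnd_def sbnd_def)
    qed
    then show ?thesis using sb h0 by (simp add: good_def)
  qed
  show ?thesis using b1 bI tb bmax goodQ goodh by blast
qed

end



lemma expansion_gen:
  fixes Q f :: "'a::field poly"
  shows "f = (\<Sum>i<n. expcoeff Q f i * Q^i) + (f div Q^n) * Q^n"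
proof (induction n)
  case 0 then show ?case by simp
next
  case (Suc n)
  have e1: "f div Q^n = (f div Q^n) mod Q + (f div Q^n div Q) * Q"
    by (metis div_mult_mod_eq add.commute)
  have e2: "f div Q^n div Q = f div Q^(Suc n)"
    by (metis poly_div_mult_right power_Suc2)
  have "(f div Q^n) * Q^n = ((f div Q^n) mod Q + f div Q^(Suc n) * Q) * Q^n"
    using e1 e2 by metis
  also have "\<dots> = expcoeff Q f n * Q^n + f div Q^(Suc n) * Q^(Suc n)"
    unfolding expcoeff_def by (simp only: distrib_right mult.assoc power_Suc2 mult.commute[of Q])
  finally show ?case using Suc by (simp add: ac_simps)
qed

lemma expansion:
  fixes Q f :: "'a::field poly"
  assumes "degree Q > 0"
  shows "f = (\<Sum>i\<le>degree f. expcoeff Q f i * Q^i)"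
proof -
  let ?n = "Suc (degree f)"
  have "degree (Q^?n) = ?n * degree Q" by (rule degree_power_eq) (use assms in auto)
  moreover have "?n * degree Q \<ge> ?n * 1" using assms by (intro mult_le_mono2) simp
  ultimately have "f div Q^?n = 0" by (intro div_poly_less) simp
  moreover note expansion_gen[of f Q ?n]
  ultimately have "f = (\<Sum>i<?n. expcoeff Q f i * Q^i)" by simp
  then show ?thesis by (simp only: lessThan_Suc_atMost)
qed

lemma expcoeff_deg:
  "Q \<noteq> 0 \<Longrightarrow> expcoeff Q f i \<noteq> 0 \<Longrightarrow> degree (expcoeff Q f i) < degree Q"
  unfolding expcoeff_def by (rule degree_mod_less')




locale kp = val nu for nu :: "'a::field poly \<Rightarrow> 'g::linordered_ab_group_add" +
  fixes Q :: "'a poly" and A :: 'g and b :: nat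
  assumes dQ: "degree Q > 0" and b1: "b \<ge> 1" and goodQ: "good A b Q b"
    and goodh: "\<And>h. h \<noteq> 0 \<Longrightarrow> degree h < degree Q \<Longrightarrow> good A b h 0"
begin

lemma Q0: "Q \<noteq> 0" using dQ by auto

lemma term_good: "expcoeff Q f i \<noteq> 0 \<Longrightarrow> good A b (expcoeff Q f i * Q^i) (i*b)"
  using good_mult[OF goodh[OF _ expcoeff_deg[OF Q0]] good_power[OF goodQ, of i]] by simp

lemma trunc_fin: "finite {nu (expcoeff Q f i * Q ^ i) | i. i \<le> degree f \<and> expcoeff Q f i \<noteq> 0}"
  by (rule finite_image_set) simp

lemma trunc_le: "i \<le> degree f \<Longrightarrow> expcoeff Q f i \<noteq> 0 \<Longrightarrow> trunc_val nu Q f \<le> nu (expcoeff Q f i * Q^i)"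
  unfolding trunc_val_def by (rule Min_le[OF trunc_fin]) blast

lemma trunc_in: assumes "f \<noteq> 0"
  shows "\<exists>i\<le>degree f. expcoeff Q f i \<noteq> 0 \<and> trunc_val nu Q f = nu (expcoeff Q f i * Q^i)"
proof -
  have "\<exists>i\<le>degree f. expcoeff Q f i \<noteq> 0"
  proof (rule ccontr)
    assume "\<not> ?thesis"
    then have "(\<Sum>i\<le>degree f. expcoeff Q f i * Q^i) = 0" by simp
    then show False using expansion[OF dQ, of f, symmetric] assms by simp
  qed
  then have ne: "{nu (expcoeff Q f i * Q ^ i) | i. i \<le> degree f \<and> expcoeff Q f i \<noteq> 0} \<noteq> {}" by blast
  show ?thesis using Min_in[OF trunc_fin ne] unfolding trunc_val_def by blast
qed

lemma step1: assumes "f \<noteq> 0" shows "trunc_val nu Q f \<le> nu f"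
proof -
  obtain i where i: "i \<in> {..degree f}" "expcoeff Q f i * Q^i \<noteq> 0"
      "nu (expcoeff Q f i * Q^i) \<le> nu (\<Sum>i\<le>degree f. expcoeff Q f i * Q^i)"
    using sum_exists_le[of "{..degree f}" "\<lambda>i. expcoeff Q f i * Q^i"] expansion[OF dQ, of f, symmetric] assms
    by auto
  then have "trunc_val nu Q f \<le> nu (expcoeff Q f i * Q^i)" by (intro trunc_le) auto
  also have "\<dots> \<le> nu f" using i(3) expansion[OF dQ, of f, symmetric] by simp
  finally show ?thesis .
qed

lemma step3: assumes "f \<noteq> 0" "trunc_val nu Q f = nu f" "hasse_deriv K f \<noteq> 0"
  shows "nsmul b (nu f) \<le> nsmul b (nu (hasse_deriv K f)) + nsmul K A"
proof -
  define T where "T i = expcoeff Q f i * Q^i" for i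
  have DK: "hasse_deriv K f = (\<Sum>i\<le>degree f. hasse_deriv K (T i))"
    using expansion[OF dQ, of f, symmetric] hasse_sum[of K T "{..degree f}"] unfolding T_def by simp
  obtain i where i: "i \<le> degree f" "hasse_deriv K (T i) \<noteq> 0"
      "nu (hasse_deriv K (T i)) \<le> nu (hasse_deriv K f)"
    using sum_exists_le[of "{..degree f}" "\<lambda>i. hasse_deriv K (T i)"] DK assms(3) by auto
  have gi: "expcoeff Q f i \<noteq> 0" using i(2) by (auto simp: T_def)
  have "nsmul b (nu f) \<le> nsmul b (nu (T i))"
    using trunc_le[OF i(1) gi] assms(2) by (simp add: T_def nsmul_mono)
  also have "\<dots> \<le> nsmul b (nu (hasse_deriv K (T i))) + nsmul K A"
    using term_good[OF gi] i(2) unfolding good_def bnd_def T_def by blast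
  also have "\<dots> \<le> nsmul b (nu (hasse_deriv K f)) + nsmul K A"
    using i(3) by (simp add: nsmul_mono)
  finally show ?thesis .
qed

lemma step2: assumes f0: "f \<noteq> 0" and lt: "trunc_val nu Q f < nu f"
  shows "\<exists>K\<ge>1. hasse_deriv K f \<noteq> 0 \<and> nsmul b (nu (hasse_deriv K f)) + nsmul K A < nsmul b (nu f)"
proof -
  define T where "T i = expcoeff Q f i * Q^i" for i
  define m where "m = trunc_val nu Q f"
  define J where "J = {i. i \<le> degree f \<and> expcoeff Q f i \<noteq> 0 \<and> nu (T i) = m}"
  have Jfin: "finite J" by (rule finite_subset[of _ "{..degree f}"]) (auto simp: J_def)
  have Jne: "J \<noteq> {}" using trunc_in[OF f0] by (auto simp: J_def T_def m_def)
  define k0 where "k0 = Max J"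
  have k0J: "k0 \<in> J" using Jfin Jne k0_def by simp
  have ge: "m \<le> nu (T i)" if "i \<le> degree f" "expcoeff Q f i \<noteq> 0" for i
    using trunc_le[OF that] by (simp add: m_def T_def)
  have gt: "m < nu (T i)" if "i \<le> degree f" "expcoeff Q f i \<noteq> 0" "i > k0" for i
  proof -
    have "i \<notin> J" using that Jfin k0_def by (meson Max_ge leD)
    then show ?thesis using ge[OF that(1,2)] that by (auto simp: J_def)
  qed
  have Tnz: "T i \<noteq> 0 \<longleftrightarrow> expcoeff Q f i \<noteq> 0" for i using Q0 by (simp add: T_def)
  have fexp: "(\<Sum>i\<le>degree f. T i) = f" using expansion[OF dQ, of f, symmetric] by (simp add: T_def)
  have k0pos: "k0 \<ge> 1"
  proof (rule ccontr)
    assume "\<not> k0 \<ge> 1" then have k00: "k0 = 0" by simp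
    have "(\<Sum>i\<le>degree f. T i) \<noteq> 0 \<and> nu (\<Sum>i\<le>degree f. T i) = nu (T 0)"
    proof (rule sum_unique)
      fix i assume "i \<in> {..degree f}" "i \<noteq> 0" "T i \<noteq> 0"
      then show "nu (T 0) < nu (T i)" using gt[of i] k0J k00 Tnz by (auto simp: J_def)
    qed (use k0J k00 Tnz in \<open>auto simp: J_def\<close>)
    then have "nu f = m" using fexp k0J k00 by (auto simp: J_def)
    then show False using lt m_def by simp
  qed
  define K where "K = k0 * b"
  have K1: "K \<ge> 1" using k0pos b1 by (simp add: K_def)
  have DK: "hasse_deriv K f = (\<Sum>i\<le>degree f. hasse_deriv K (T i))"
    using fexp hasse_sum[of K T "{..degree f}"] by metis
  have gk0: "expcoeff Q f k0 \<noteq> 0" "k0 \<le> degree f" "nu (T k0) = m" using k0J by (auto simp: J_def)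
  have G0: "good A b (T k0) K" using term_good[OF gk0(1)] by (simp add: T_def K_def)
  have eq0: "nsmul b m = nsmul b (nu (hasse_deriv K (T k0))) + nsmul K A"
    and nz0: "hasse_deriv K (T k0) \<noteq> 0"
    using G0 gk0(3) by (auto simp: good_def)
  have U: "(\<Sum>i\<le>degree f. hasse_deriv K (T i)) \<noteq> 0 \<and>
      nu (\<Sum>i\<le>degree f. hasse_deriv K (T i)) = nu (hasse_deriv K (T k0))"
  proof (rule sum_unique)
    fix i assume i: "i \<in> {..degree f}" "i \<noteq> k0" "hasse_deriv K (T i) \<noteq> 0"
    then have gi: "expcoeff Q f i \<noteq> 0" using Tnz by fastforce
    have Gi: "good A b (T i) (i*b)" using term_good[OF gi] by (simp add: T_def)
    have "nsmul b m < nsmul b (nu (hasse_deriv K (T i))) + nsmul K A"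
    proof (cases "i < k0")
      case True
      then have "i*b < K" using b1 by (simp add: K_def)
      then have "nsmul b (nu (T i)) < nsmul b (nu (hasse_deriv K (T i))) + nsmul K A"
        using Gi i(3) unfolding good_def sbnd_def by blast
      moreover have "nsmul b m \<le> nsmul b (nu (T i))" using ge[of i] i gi by (simp add: nsmul_mono)
      ultimately show ?thesis by simp
    next
      case False
      then have "i > k0" using i by simp
      then have "nsmul b m < nsmul b (nu (T i))" using gt[of i] i gi b1 by (simp add: nsmul_strict)
      moreover have "nsmul b (nu (T i)) \<le> nsmul b (nu (hasse_deriv K (T i))) + nsmul K A"
        using Gi i(3) unfolding good_def bnd_def by blast
      ultimately show ?thesis by simp
    qed
    then have "nsmul b (nu (hasse_deriv K (T k0))) < nsmul b (nu (hasse_deriv K (T i)))"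
      using eq0 by simp
    then show "nu (hasse_deriv K (T k0)) < nu (hasse_deriv K (T i))" by (rule nsmul_less_cancel)
  qed (use gk0 nz0 in auto)
  then have "hasse_deriv K f \<noteq> 0" "nsmul b (nu (hasse_deriv K f)) + nsmul K A = nsmul b m"
    using DK eq0 by auto
  moreover have "nsmul b m < nsmul b (nu f)" using lt b1 by (simp add: m_def nsmul_strict)
  ultimately show ?thesis using K1 by auto
qed

end



theorem corollary4p8:
  fixes \<nu> :: "'a::field poly \<Rightarrow> 'g::linordered_ab_group_add"
    and Q Q' f :: "'a poly"
  assumes "is_valuation \<nu>"
    and "key_poly \<nu> Q" and "key_poly \<nu> Q'"
    and "eps_le \<nu> Q Q'"
    and "f \<noteq> 0"
    and "trunc_val \<nu> Q f = \<nu> f"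
  shows "trunc_val \<nu> Q' f = \<nu> f"
proof (rule ccontr)
  assume ne: "trunc_val \<nu> Q' f \<noteq> \<nu> f"
  interpret V: val \<nu> using assms(1) by unfold_locales
  obtain A b where Ab: "b \<ge> 1" "eps_term \<nu> Q b = (A, b)" "b \<in> eps_idx Q" "V.good A b Q b"
      "\<forall>h. h \<noteq> 0 \<longrightarrow> degree h < degree Q \<longrightarrow> V.good A b h 0"
    using V.key_setup[OF assms(2)] by blast
  obtain A' b' where Ab': "b' \<ge> 1" "\<forall>j\<in>eps_idx Q'. frac_le (eps_term \<nu> Q' j) (A', b')" "V.good A' b' Q' b'"
      "\<forall>h. h \<noteq> 0 \<longrightarrow> degree h < degree Q' \<longrightarrow> V.good A' b' h 0"
    using V.key_setup[OF assms(3)] by blast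
  interpret K1: kp \<nu> Q A b
    using assms(2) Ab by unfold_locales (auto simp: key_poly_def)
  interpret K2: kp \<nu> Q' A' b'
    using assms(3) Ab' by unfold_locales (auto simp: key_poly_def)
  have lt: "trunc_val \<nu> Q' f < \<nu> f" using K2.step1[OF assms(5)] ne by simp
  obtain K where K: "K \<ge> 1" "hasse_deriv K f \<noteq> 0"
      "nsmul b' (\<nu> (hasse_deriv K f)) + nsmul K A' < nsmul b' (\<nu> f)"
    using K2.step2[OF assms(5) lt] by blast
  have s3: "nsmul b (\<nu> f) \<le> nsmul b (\<nu> (hasse_deriv K f)) + nsmul K A"
    using K1.step3[OF assms(5,6) K(2)] .
  obtain k' where k': "k' \<in> eps_idx Q'" "\<forall>j\<in>eps_idx Q. frac_le (eps_term \<nu> Q j) (eps_term \<nu> Q' k')"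
    using assms(4) by (auto simp: eps_le_def)
  have "frac_le (eps_term \<nu> Q b) (eps_term \<nu> Q' k')" using k'(2) Ab(3) by blast
  then have "frac_le (A, b) (eps_term \<nu> Q' k')" using Ab(2) by simp
  moreover have "snd (eps_term \<nu> Q' k') > 0" using k'(1) by (simp add: eps_idx_def eps_term_def)
  ultimately have "frac_le (A, b) (A', b')" using frac_trans Ab'(2) k'(1) by blast
  then have AA: "nsmul b' A \<le> nsmul b A'" by (simp add: frac_le_def)
  define P where "P = nsmul b' (nsmul b (\<nu> f))"
  define R where "R = nsmul b' (nsmul b (\<nu> (hasse_deriv K f)))"
  define W where "W = nsmul K (nsmul b A')"
  have "P \<le> nsmul b' (nsmul b (\<nu> (hasse_deriv K f)) + nsmul K A)"
    unfolding P_def using s3 by (rule nsmul_mono)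
  also have "\<dots> = R + nsmul K (nsmul b' A)"
    by (simp add: R_def nsmul_add_right nsmul_comm[of b' K])
  also have "\<dots> \<le> R + W" unfolding W_def using AA by (simp add: nsmul_mono)
  finally have 1: "P \<le> R + W" .
  have "nsmul b (nsmul b' (\<nu> (hasse_deriv K f)) + nsmul K A') < nsmul b (nsmul b' (\<nu> f))"
    using K(3) Ab(1) by (simp add: nsmul_strict)
  then have "R + W < P"
    by (simp add: R_def W_def P_def nsmul_add_right nsmul_comm[of b b'] nsmul_comm[of b K])
  with 1 show False by simp
qed



end
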